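(* Let $N\ge 4$, $1\le m\le N$ and $1\le k\le N$ be integers. Consider a uniformly random ranking of $N$ items exactly $m$ of which are relevant, i.e. the set of positions of the relevant items is a uniformly random $m$-element subset of $\{1,\dots,N\}$. For $j=1,\dots,N$ let $I_j\in\{0,1\}$ equal $1$ iff the item at position $j$ is relevant, let $P@i=\frac1i\sum_{j=1}^i I_j$, and let $AP@k=\frac{1}{\min(m,k)}\sum_{i=1}^k P@i\cdot I_i$. Then $$\operatorname{Var}(AP@k)=\frac{1}{M^2}\frac{m}{N}\Big[k\big(C+2(E-F)+(k-1)G\big)+H_k\big(B-2(E-kF)\big)+H_k^2 D+H_k^{(2)}(A-D)\Big],$$ where $M=\min(m,k)$, $H_k=\sum_{i=1}^k\frac1i$, $H_k^{(2)}=\sum_{i=1}^k\frac1{i^2}$, and \begin{align*} A&=1-\frac{m}{N}-\frac{m-1}{N-1}\left(3-2\frac{m-2}{N-2}-\frac{m}{N}\left(2-\frac{m-1}{N-1}\right)\right),\\ B&=\frac{m-1}{N-1}\left(3\left(1-\frac{m-2}{N-2}\right)-2\frac{m}{N}\left(1-\frac{m-1}{N-1}\right)\right),\\ C&=\frac{m-1}{N-1}\left(\frac{m-2}{N-2}-\frac{m(m-1)}{N(N-1)}\right),\\ D&=\frac{m-1}{N-1}\left(2-5\frac{m-2}{N-2}+3\frac{(m-2)(m-3)}{(N-2)(N-3)}\right)-\frac{m}{N}\left(1-\frac{m-1}{N-1}\right)^2,\\ E&=\frac{m-1}{N-1}\left(3\frac{m-2}{N-2}\left(1-\frac{m-3}{N-3}\right)-\frac{m}{N}\left(1-\frac{m-1}{N-1}\right)\right),\\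 F&=\frac{m-1}{N-1}\left(\frac{m-2}{N-2}\left(1-\frac{m-3}{N-3}\right)-\frac{m}{N}\left(1-\frac{m-1}{N-1}\right)\right),\\ G&=\frac{m-1}{N-1}\left(\frac{(m-2)(m-3)}{(N-2)(N-3)}-\frac{m}{N}\frac{m-1}{N-1}\right). \end{align*}
   Context: This is the offline evaluation model (sampling of the $m$ relevant positions among $N$ without replacement, with equal probabilities). *)

theory Defs
  imports "HOL-Probability.Probability"
begin

text \<open>Sample space: the set of positions of the relevant items, a uniformly random
  m-element subset of {1..N}.\<close>
definition relevant_positions :: "nat \<Rightarrow> nat \<Rightarrow> nat set set" where
  "relevant_positions N m = {S. S \<subseteq> {1..N} \<and> card S = m}"

definition ranking_pmf :: "nat \<Rightarrow> nat \<Rightarrow> nat set pmf" where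
  "ranking_pmf N m = pmf_of_set (relevant_positions N m)"

definition rel_ind :: "nat set \<Rightarrow> nat \<Rightarrow> real" where
  "rel_ind S j = (if j \<in> S then 1 else 0)"

definition prec_at :: "nat set \<Rightarrow> nat \<Rightarrow> real" where
  "prec_at S i = (1 / real i) * (\<Sum>j=1..i. rel_ind S j)"

definition avg_prec_at :: "nat \<Rightarrow> nat \<Rightarrow> nat set \<Rightarrow> real" where
  "avg_prec_at m k S = (1 / real (min m k)) * (\<Sum>i=1..k. prec_at S i * rel_ind S i)"

end

theory Submission
  imports Defs
begin


lemma sum_card_insert:
  fixes h :: "nat \<Rightarrow> real"
  assumes "finite A" "finite D"
  shows "(\<Sum>b\<in>A. h (card (insert b D))) =
    real (card (A\<inter>D)) * h (card D) + real (card A - card (A\<inter>D)) * h (Suc (card D))"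
proof -
  have "A = (A\<inter>D) \<union> (A-D)" by blast
  then have "(\<Sum>b\<in>A. h (card (insert b D))) = (\<Sum>b\<in>A\<inter>D. h (card (insert b D))) + (\<Sum>b\<in>A-D. h (card (insert b D)))"
    using assms by (metis Diff_disjoint finite_Diff finite_Int inf_commute sum.union_disjoint Int_Diff_disjoint)
  also have "(\<Sum>b\<in>A\<inter>D. h (card (insert b D))) = (\<Sum>b\<in>A\<inter>D. h (card D))"
    by (intro sum.cong) (auto simp: insert_absorb)
  also have "(\<Sum>b\<in>A-D. h (card (insert b D))) = (\<Sum>b\<in>A-D. h (Suc (card D)))"
    by (intro sum.cong) (auto simp: assms)
  finally show ?thesis using assms by (simp add: card_Diff_subset_Int)
qed

definition qq :: "nat \<Rightarrow> nat \<Rightarrow> nat \<Rightarrow> real" where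
  "qq N m t = (\<Prod>i<t. (real m - real i) / (real N - real i))"

lemma binom_ff:
  assumes "t \<le> m" "m \<le> N"
  shows "((N - t) choose (m - t)) * (\<Prod>i<t. (N - i)) = (N choose m) * (\<Prod>i<t. (m - i))"
  using assms
proof (induction t)
  case 0 then show ?case by simp
next
  case (Suc t)
  have IH: "((N - t) choose (m - t)) * (\<Prod>i<t. (N - i)) = (N choose m) * (\<Prod>i<t. (m - i))"
    using Suc by simp
  have ab: "(m - t) * ((N - t) choose (m - t)) = (N - t) * ((N - Suc t) choose (m - Suc t))"
  proof -
    obtain a where a: "N - t = Suc a" using Suc by (metis Suc_diff_le le_trans Suc_le_lessD less_imp_Suc_add diff_Suc_Suc zero_less_diff)
    obtain b where b: "m - t = Suc b" using Suc by (metis Suc_diff_le Suc_le_lessD diff_Suc_Suc zero_less_diff less_imp_Suc_add)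
    have "N - Suc t = a" "m - Suc t = b" using a b by auto
    then show ?thesis using a b Suc_times_binomial[of b a] by (simp only:)
  qed
  have "((N - Suc t) choose (m - Suc t)) * (\<Prod>i<Suc t. (N - i))
      = ((N - Suc t) choose (m - Suc t)) * (N - t) * (\<Prod>i<t. (N - i))" by (simp add: mult.commute)
  also have "\<dots> = (m - t) * ((N - t) choose (m - t)) * (\<Prod>i<t. (N - i))" using ab by (simp add: mult.commute)
  also have "\<dots> = (N choose m) * (\<Prod>i<Suc t. (m - i))" using IH by (simp add: mult.commute mult.left_commute)
  finally show ?case .
qed

lemma card_R: "card (relevant_positions N m) = N choose m"
  unfolding relevant_positions_def using n_subsets[of "{1..N}" m] by simp

lemma finite_R: "finite (relevant_positions N m)"
  unfolding relevant_positions_def by (rule finite_subset[of _ "Pow {1..N}"]) auto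

lemma card_sup:
  assumes T: "finite T" "T \<subseteq> {1..N}" and tm: "card T \<le> m"
  shows "card {S\<in>relevant_positions N m. T \<subseteq> S} = (N - card T) choose (m - card T)"
proof -
  let ?U = "{U. U \<subseteq> {1..N} - T \<and> card U = m - card T}"
  have "{S\<in>relevant_positions N m. T \<subseteq> S} = (\<lambda>U. U \<union> T) ` ?U"
  proof (intro equalityI subsetI)
    fix S assume "S \<in> {S\<in>relevant_positions N m. T \<subseteq> S}"
    then have S: "S \<subseteq> {1..N}" "card S = m" "T \<subseteq> S" unfolding relevant_positions_def by auto
    have fS: "finite S" using S(1) finite_subset by blast
    have "S = (S - T) \<union> T" using S by blast
    moreover have "S - T \<in> ?U" using S fS T by (auto simp: card_Diff_subset)
    ultimately show "S \<in> (\<lambda>U. U \<union> T) ` ?U" by blast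
  next
    fix S assume "S \<in> (\<lambda>U. U \<union> T) ` ?U"
    then obtain U where U: "U \<subseteq> {1..N} - T" "card U = m - card T" "S = U \<union> T" by blast
    have fU: "finite U" using U(1) finite_subset by blast
    have "U \<inter> T = {}" using U(1) by blast
    then have "card S = card U + card T" using U(3) fU T(1) by (simp add: card_Un_disjoint)
    then have "card S = m" using U(2) tm by simp
    then show "S \<in> {S\<in>relevant_positions N m. T \<subseteq> S}" using U T unfolding relevant_positions_def by auto
  qed
  moreover have "inj_on (\<lambda>U. U \<union> T) ?U" by (rule inj_onI) blast
  ultimately have "card {S\<in>relevant_positions N m. T \<subseteq> S} = card ?U" by (simp add: card_image)
  also have "\<dots> = card ({1..N} - T) choose (m - card T)" by (rule n_subsets) simp
  also have "card ({1..N} - T) = N - card T" using T by (simp add: card_Diff_subset)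
  finally show ?thesis .
qed

lemma count_sup:
  assumes T: "finite T" "T \<subseteq> {1..N}" and mN: "m \<le> N"
  shows "(\<Sum>S\<in>relevant_positions N m. (if T \<subseteq> S then 1 else 0::real)) =
    real (card (relevant_positions N m)) * qq N m (card T)"
proof -
  have "(\<Sum>S\<in>relevant_positions N m. (if T \<subseteq> S then 1 else 0::real)) =
      real (card {S\<in>relevant_positions N m. T \<subseteq> S})"
    using finite_R[of N m] by (simp add: sum.If_cases Int_def)
  also have "\<dots> = real (card (relevant_positions N m)) * qq N m (card T)"
  proof (cases "card T \<le> m")
    case True
    let ?t = "card T"
    have tN: "?t \<le> N" using card_mono[OF _ T(2)] by simp
    have nat: "((N - ?t) choose (m - ?t)) * (\<Prod>i<?t. (N - i)) = (N choose m) * (\<Prod>i<?t. (m - i))"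
      using binom_ff True mN by blast
    have "real ((N - ?t) choose (m - ?t)) * (\<Prod>i<?t. (real N - real i)) = real (N choose m) * (\<Prod>i<?t. (real m - real i))"
    proof -
      have "real (((N - ?t) choose (m - ?t)) * (\<Prod>i<?t. (N - i))) = real ((N choose m) * (\<Prod>i<?t. (m - i)))"
        using nat by simp
      moreover have "(\<Prod>i<?t. real (N - i)) = (\<Prod>i<?t. (real N - real i))"
        using tN by (intro prod.cong) (auto simp: of_nat_diff)
      moreover have "(\<Prod>i<?t. real (m - i)) = (\<Prod>i<?t. (real m - real i))"
        using True by (intro prod.cong) (auto simp: of_nat_diff)
      ultimately show ?thesis by (simp add: of_nat_prod)
    qed
    moreover have nz: "(\<Prod>i<?t. (real N - real i)) \<noteq> 0" using tN by (simp add: prod_zero_iff)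
    ultimately have "real ((N - ?t) choose (m - ?t)) = real (N choose m) * ((\<Prod>i<?t. (real m - real i)) / (\<Prod>i<?t. (real N - real i)))"
      by (simp add: field_simps)
    then show ?thesis using card_sup[OF T True] by (simp add: card_R qq_def prod_dividef)
  next
    case False
    have "\<not> (S \<in> relevant_positions N m \<and> T \<subseteq> S)" for S
    proof
      assume h: "S \<in> relevant_positions N m \<and> T \<subseteq> S"
      then have "finite S" "card S = m" unfolding relevant_positions_def using finite_subset by auto
      then show False using h card_mono[of S T] False by simp
    qed
    then have E: "{S\<in>relevant_positions N m. T \<subseteq> S} = {}" by blast
    have q0: "qq N m (card T) = 0" unfolding qq_def using False
      by (intro prod_zero) auto
    show ?thesis unfolding E q0 by simp
  qed
  finally show ?thesis .
qed



definition ind :: "nat set \<Rightarrow> nat set \<Rightarrow> real" where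
  "ind S T = (if T \<subseteq> S then 1 else 0)"

lemma X_eq: "avg_prec_at m k S = (1 / real (min m k)) * (\<Sum>i=1..k. \<Sum>j=1..i. (1 / real i) * ind S {i,j})"
proof -
  have "prec_at S i * rel_ind S i = (\<Sum>j=1..i. (1 / real i) * ind S {i,j})" for i
    unfolding prec_at_def sum_distrib_left sum_distrib_right
    by (intro sum.cong) (auto simp: rel_ind_def ind_def)
  then show ?thesis unfolding avg_prec_at_def by simp
qed

lemma ind_mult: "ind S A * ind S B = ind S (A \<union> B)"
  by (auto simp: ind_def)

lemma X2_eq: "(avg_prec_at m k S)^2 = (1 / real (min m k))^2 *
   (\<Sum>i=1..k. \<Sum>j=1..i. \<Sum>a=1..k. \<Sum>b=1..a. (1 / real i) * (1 / real a) * ind S (insert b (insert j {i,a})))"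
proof -
  have e: "ind S {i,j} * ind S {a,b} = ind S (insert b (insert j {i,a}))" for i j a b :: nat
    unfolding ind_mult by (metis insert_commute insert_is_Un sup_assoc sup_commute)
  let ?f = "\<lambda>i j. (1 / real i) * ind S {i,j}"
  have "(\<Sum>i=1..k. \<Sum>j=1..i. ?f i j) * (\<Sum>a=1..k. \<Sum>b=1..a. ?f a b) =
     (\<Sum>i=1..k. \<Sum>j=1..i. \<Sum>a=1..k. \<Sum>b=1..a. ?f i j * ?f a b)"
    unfolding sum_distrib_right unfolding sum_distrib_left by (rule refl)
  also have "\<dots> = (\<Sum>i=1..k. \<Sum>j=1..i. \<Sum>a=1..k. \<Sum>b=1..a. (1 / real i) * (1 / real a) * ind S (insert b (insert j {i,a})))"
    by (simp only: e[symmetric] mult_ac)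
  finally show ?thesis unfolding X_eq power2_eq_square by (simp only: mult_ac)
qed

lemma sumH: "(\<Sum>i=1..k. (\<alpha> * (1 / real i) + \<beta>)) = \<alpha> * (\<Sum>i=1..k. 1 / real i) + \<beta> * real k"
  by (simp add: sum.distrib sum_distrib_left)

definition inner :: "(nat \<Rightarrow> real) \<Rightarrow> nat \<Rightarrow> nat \<Rightarrow> real" where
  "inner Q i a = (\<Sum>j=1..i. \<Sum>b=1..a. Q (card (insert b (insert j {i,a}))))"

lemma inner_b:
  fixes Q :: "nat \<Rightarrow> real"
  assumes "D \<subseteq> {1..a}"
  shows "(\<Sum>b=1..a. Q (card (insert b D))) = real (card D) * Q (card D) + (real a - real (card D)) * Q (Suc (card D))"
proof -
  have fD: "finite D" using assms finite_subset by blast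
  have "{1..a} \<inter> D = D" using assms by blast
  moreover have "card D \<le> a" using card_mono[OF _ assms] by simp
  ultimately show ?thesis using sum_card_insert[of "{1..a}" D Q] fD by (simp add: of_nat_diff)
qed

lemma inner_lt:
  fixes Q :: "nat \<Rightarrow> real"
  assumes "1 \<le> i" "i < a"
  shows "inner Q i a = 2*Q 2 + (real a - 2)*Q 3 + (real i - 1)*(3*Q 3 + (real a - 3)*Q 4)"
proof -
  define H where "H c = real c * Q c + (real a - real c) * Q (Suc c)" for c
  have "inner Q i a = (\<Sum>j=1..i. H (card (insert j {i,a})))"
    unfolding inner_def H_def using assms by (intro sum.cong refl inner_b) auto
  also have "\<dots> = real (card ({1..i} \<inter> {i,a})) * H (card {i,a}) + real (card {1..i} - card ({1..i} \<inter> {i,a})) * H (Suc (card {i,a}))"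
    by (rule sum_card_insert) auto
  also have "{1..i} \<inter> {i,a} = {i}" using assms by auto
  also have "card {i,a} = 2" using assms by auto
  finally show ?thesis using assms unfolding H_def by (simp add: of_nat_diff numeral_eq_Suc algebra_simps)
qed

lemma inner_eq:
  fixes Q :: "nat \<Rightarrow> real"
  assumes "1 \<le> i"
  shows "inner Q i i = Q 1 + 3*(real i - 1)*Q 2 + (real i - 1)*(real i - 2)*Q 3"
proof -
  define H where "H c = real c * Q c + (real i - real c) * Q (Suc c)" for c
  have "inner Q i i = (\<Sum>j=1..i. H (card (insert j {i})))"
    unfolding inner_def H_def insert_absorb2 using assms by (intro sum.cong refl inner_b) auto
  also have "\<dots> = real (card ({1..i} \<inter> {i})) * H (card {i}) + real (card {1..i} - card ({1..i} \<inter> {i})) * H (Suc (card {i}))"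
    by (rule sum_card_insert) auto
  also have "{1..i} \<inter> {i} = {i}" using assms by auto
  finally show ?thesis using assms unfolding H_def by (simp add: of_nat_diff numeral_eq_Suc algebra_simps)
qed

lemma inner_sym: "inner Q i a = inner Q a i"
  unfolding inner_def
  by (subst sum.swap) (intro sum.cong refl, simp add: insert_commute)

definition HH :: "nat \<Rightarrow> real" where "HH k = (\<Sum>i=1..k. 1 / real i)"
definition HH2 :: "nat \<Rightarrow> real" where "HH2 k = (\<Sum>i=1..k. 1 / (real i)^2)"

lemma E1_eq:
  fixes Q :: "nat \<Rightarrow> real"
  shows "(\<Sum>i=1..k. \<Sum>j=1..i. (1 / real i) * Q (card {i,j})) = HH k * (Q 1 - Q 2) + real k * Q 2"
proof -
  have "(\<Sum>j=1..i. (1 / real i) * Q (card {i,j})) = (Q 1 - Q 2) * (1 / real i) + Q 2" if "1 \<le> i" for i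
  proof -
    have "(\<Sum>j=1..i. Q (card (insert j {i}))) = real (card ({1..i} \<inter> {i})) * Q (card {i}) + real (card {1..i} - card ({1..i} \<inter> {i})) * Q (Suc (card {i}))"
      by (rule sum_card_insert) auto
    also have "{1..i} \<inter> {i} = {i}" using that by auto
    moreover have q2: "Q (Suc (Suc 0)) = Q 2" by (simp only: numeral_2_eq_2)
    ultimately have "(\<Sum>j=1..i. Q (card (insert j {i}))) = Q 1 + (real i - 1) * Q 2" using that by (simp add: of_nat_diff)
    moreover have "(\<Sum>j=1..i. (1 / real i) * Q (card {i,j})) = (1 / real i) * (\<Sum>j=1..i. Q (card (insert j {i})))"
      by (simp add: sum_distrib_left insert_commute)
    ultimately show ?thesis using that by (simp add: field_simps)
  qed
  then have "(\<Sum>i=1..k. \<Sum>j=1..i. (1 / real i) * Q (card {i,j})) = (\<Sum>i=1..k. (Q 1 - Q 2) * (1 / real i) + Q 2)"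
    by (intro sum.cong) auto
  then show ?thesis unfolding HH_def sumH by (simp add: mult.commute)
qed

lemma step_alg:
  fixes h h2 u q1 q2 q3 q4 :: real
  assumes "u \<noteq> 0"
  shows "(h + 1/u)^2 * (2*q2 - 5*q3 + 3*q4) + ((h2 + 1/u^2) * (q1 - 3*q2 + 2*q3) - (h2 + 1/u^2) * (2*q2 - 5*q3 + 3*q4)) + (h + 1/u) * (3*q2 - 3*q3) + u*q3
        + 2*(q3-q4)*(u*(h + 1/u) - u) + 6*(q3-q4)*(u - (h + 1/u)) + q4*u*(u-1)
      = (h^2 * (2*q2 - 5*q3 + 3*q4) + (h2 * (q1 - 3*q2 + 2*q3) - h2 * (2*q2 - 5*q3 + 3*q4)) + h * (3*q2 - 3*q3) + (u-1)*q3
        + 2*(q3-q4)*((u-1)*h - (u-1)) + 6*(q3-q4)*((u-1) - h) + q4*(u-1)*(u-1-1))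
        + 2 * ((1/u) * ((2*q2 + (u-2)*q3 - (3*q3 + (u-3)*q4)) * h + (3*q3 + (u-3)*q4) * (u-1)))
        + (1/u) * (1/u) * (q1 + 3*(u-1)*q2 + (u-1)*(u-2)*q3)"
  using assms by (simp add: field_simps power2_eq_square)

definition PPr :: "real \<Rightarrow> real \<Rightarrow> real \<Rightarrow> real \<Rightarrow> real \<Rightarrow> real \<Rightarrow> real \<Rightarrow> real" where
  "PPr q1 q2 q3 q4 h h2 x = h^2 * (2*q2 - 5*q3 + 3*q4) + (h2 * (q1 - 3*q2 + 2*q3) - h2 * (2*q2 - 5*q3 + 3*q4))
     + h * (3*q2 - 3*q3) + x * q3 + 2*(q3 - q4)*(x * h - x)
     + 6*(q3 - q4)*(x - h) + q4 * x * (x - 1)"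

lemma PPr_step:
  assumes "x + 1 \<noteq> 0"
  shows "PPr q1 q2 q3 q4 h h2 x + 2 * (1/(x + 1)) * ((2*q2 + (x - 1)*q3 - (3*q3 + (x - 2)*q4)) * h + (3*q3 + (x - 2)*q4) * x)
     + (1/(x + 1)) * (1/(x + 1)) * (q1 + 3*x*q2 + x*(x - 1)*q3) = PPr q1 q2 q3 q4 (h + 1/(x+1)) (h2 + 1/(x+1)^2) (x+1)"
proof -
  define u where "u = x + 1"
  have u: "u \<noteq> 0" "x = u - 1" using assms unfolding u_def by auto
  show ?thesis unfolding PPr_def u(2) using u(1) by (simp add: field_simps power2_eq_square)
qed

definition PP :: "(nat \<Rightarrow> real) \<Rightarrow> nat \<Rightarrow> real" where
  "PP Q k = HH k^2 * (2*Q 2 - 5*Q 3 + 3*Q 4) + (HH2 k * (Q 1 - 3*Q 2 + 2*Q 3) - HH2 k * (2*Q 2 - 5*Q 3 + 3*Q 4))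
     + HH k * (3*Q 2 - 3*Q 3) + real k * Q 3 + 2*(Q 3 - Q 4)*(real k * HH k - real k)
     + 6*(Q 3 - Q 4)*(real k - HH k) + Q 4 * real k * (real k - 1)"

lemma row_sum:
  fixes Q :: "nat \<Rightarrow> real"
  shows "(\<Sum>i=1..k. (1/real i)*(1/real (Suc k))*inner Q i (Suc k)) =
    (1/(real k + 1)) * ((2*Q 2 + (real k - 1)*Q 3 - (3*Q 3 + (real k - 2)*Q 4)) * HH k + (3*Q 3 + (real k - 2)*Q 4) * real k)"
proof -
  have "(1/real i)*(1/real (Suc k))*inner Q i (Suc k) = (1/(real k + 1)) * ((2*Q 2 + (real k - 1)*Q 3 - (3*Q 3 + (real k - 2)*Q 4)) * (1/real i) + (3*Q 3 + (real k - 2)*Q 4))"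
    if "i \<in> {1..k}" for i
  proof -
    have "inner Q i (Suc k) = 2*Q 2 + (real (Suc k) - 2)*Q 3 + (real i - 1)*(3*Q 3 + (real (Suc k) - 3)*Q 4)"
      using that by (intro inner_lt) auto
    then show ?thesis using that by (simp add: field_simps)
  qed
  then have "(\<Sum>i=1..k. (1/real i)*(1/real (Suc k))*inner Q i (Suc k)) =
     (\<Sum>i=1..k. (1/(real k + 1)) * ((2*Q 2 + (real k - 1)*Q 3 - (3*Q 3 + (real k - 2)*Q 4)) * (1/real i) + (3*Q 3 + (real k - 2)*Q 4)))"
    by (rule sum.cong[OF refl])
  also have "\<dots> = (1/(real k + 1)) * (\<Sum>i=1..k. ((2*Q 2 + (real k - 1)*Q 3 - (3*Q 3 + (real k - 2)*Q 4)) * (1/real i) + (3*Q 3 + (real k - 2)*Q 4)))"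
    by (simp only: sum_distrib_left)
  also have "\<dots> = (1/(real k + 1)) * ((2*Q 2 + (real k - 1)*Q 3 - (3*Q 3 + (real k - 2)*Q 4)) * HH k + (3*Q 3 + (real k - 2)*Q 4) * real k)"
    unfolding sumH HH_def ..
  finally show ?thesis .
qed

lemma E2_eq:
  fixes Q :: "nat \<Rightarrow> real"
  shows "(\<Sum>i=1..k. \<Sum>a=1..k. (1/real i)*(1/real a)*inner Q i a) = PP Q k"
proof (induction k)
  case 0
  then show ?case by (simp add: PP_def HH_def HH2_def)
next
  case (Suc k)
  let ?g = "\<lambda>i a. (1/real i)*(1/real a)*inner Q i a"
  have "(\<Sum>i=1..Suc k. \<Sum>a=1..Suc k. ?g i a) = (\<Sum>i=1..k. \<Sum>a=1..k. ?g i a) + (\<Sum>i=1..k. ?g i (Suc k)) + (\<Sum>a=1..k. ?g (Suc k) a) + ?g (Suc k) (Suc k)"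
    by (simp add: sum.distrib)
  also have "(\<Sum>a=1..k. ?g (Suc k) a) = (\<Sum>i=1..k. ?g i (Suc k))"
    by (intro sum.cong refl) (simp add: inner_sym[of Q "Suc k"])
  also have "?g (Suc k) (Suc k) = (1/(real k + 1)) * (1/(real k + 1)) * (Q 1 + 3*(real k)*Q 2 + real k*(real k - 1)*Q 3)"
    using inner_eq[of "Suc k" Q] by (simp add: add.commute)
  finally have "(\<Sum>i=1..Suc k. \<Sum>a=1..Suc k. ?g i a) = PP Q k + 2 * (1/(real k + 1)) * ((2*Q 2 + (real k - 1)*Q 3 - (3*Q 3 + (real k - 2)*Q 4)) * HH k + (3*Q 3 + (real k - 2)*Q 4) * real k)
     + (1/(real k + 1)) * (1/(real k + 1)) * (Q 1 + 3*(real k)*Q 2 + real k*(real k - 1)*Q 3)"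
    unfolding Suc row_sum by simp
  also have "\<dots> = PP Q (Suc k)"
  proof -
    have h: "HH (Suc k) = HH k + 1/(real k + 1)" unfolding HH_def by simp
    have h2: "HH2 (Suc k) = HH2 k + 1/(real k + 1)^2" unfolding HH2_def by simp
    have pp: "PP Q j = PPr (Q 1) (Q 2) (Q 3) (Q 4) (HH j) (HH2 j) (real j)" for j
      unfolding PP_def PPr_def ..
    have "real k + 1 \<noteq> 0" by simp
    from PPr_step[OF this, of "Q 1" "Q 2" "Q 3" "Q 4" "HH k" "HH2 k"]
    show ?thesis unfolding pp h h2 of_nat_Suc add.commute[of 1 "real k"] .
  qed
  finally show ?case .
qed



lemma swap2: "(\<Sum>S\<in>R. \<Sum>i\<in>A. \<Sum>j\<in>B i. f S i j) = (\<Sum>i\<in>A. \<Sum>j\<in>B i. \<Sum>S\<in>R. f S i j)"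
  by (subst sum.swap, rule sum.cong[OF refl], rule sum.swap)

lemma swap4: "(\<Sum>S\<in>R. \<Sum>i\<in>A. \<Sum>j\<in>B i. \<Sum>a\<in>C. \<Sum>b\<in>D a. f S i j a b) =
   (\<Sum>i\<in>A. \<Sum>j\<in>B i. \<Sum>a\<in>C. \<Sum>b\<in>D a. \<Sum>S\<in>R. f S i j a b)"
  by (subst swap2, intro sum.cong refl, rule swap2)

lemma variance_sets:
  fixes X :: "nat set \<Rightarrow> real"
  assumes fin: "finite R" and ne: "R \<noteq> {}"
  shows "measure_pmf.variance (pmf_of_set R) X = (\<Sum>S\<in>R. X S^2) / real (card R) - ((\<Sum>S\<in>R. X S) / real (card R))^2"
proof -
  define c where "c = real (card R)"
  define \<mu> where "\<mu> = (\<Sum>S\<in>R. X S) / c"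
  have c0: "c > 0" using fin ne unfolding c_def by (simp add: card_gt_0_iff)
  have s: "(\<Sum>S\<in>R. X S) = c * \<mu>" using c0 unfolding \<mu>_def by simp
  have "(\<Sum>S\<in>R. (X S - \<mu>)^2) = (\<Sum>S\<in>R. X S^2) - 2*\<mu>*(\<Sum>S\<in>R. X S) + c*\<mu>^2"
    unfolding power2_diff by (simp add: sum.distrib sum_subtractf sum_distrib_left sum_distrib_right c_def mult_ac)
  then have "(\<Sum>S\<in>R. (X S - \<mu>)^2) = (\<Sum>S\<in>R. X S^2) - c * \<mu>^2" unfolding s by (simp add: power2_eq_square)
  then show ?thesis
    unfolding integral_pmf_of_set[OF ne fin] c_def[symmetric] \<mu>_def[symmetric]
    using c0 by (simp add: field_simps power2_eq_square)
qed



lemma final_alg: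
  fixes r n x h h2 :: real
  assumes "n \<noteq> 0" "n - 1 \<noteq> 0" "n - 2 \<noteq> 0" "n - 3 \<noteq> 0"
  defines "q1 \<equiv> r/n"
  defines "q2 \<equiv> r/n * ((r-1)/(n-1))"
  defines "q3 \<equiv> r/n * ((r-1)/(n-1)) * ((r-2)/(n-2))"
  defines "q4 \<equiv> r/n * ((r-1)/(n-1)) * ((r-2)/(n-2)) * ((r-3)/(n-3))"
  defines "A \<equiv> 1 - r/n - (r-1)/(n-1) * (3 - 2*(r-2)/(n-2) - r/n * (2 - (r-1)/(n-1)))"
  defines "B \<equiv> (r-1)/(n-1) * (3*(1 - (r-2)/(n-2)) - 2*(r/n)*(1 - (r-1)/(n-1)))"
  defines "C \<equiv> (r-1)/(n-1) * ((r-2)/(n-2) - r*(r-1)/(n*(n-1)))"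
  defines "D \<equiv> (r-1)/(n-1) * (2 - 5*(r-2)/(n-2) + 3*((r-2)*(r-3))/((n-2)*(n-3)))
                 - r/n * (1 - (r-1)/(n-1))^2"
  defines "E \<equiv> (r-1)/(n-1) * (3*((r-2)/(n-2))*(1 - (r-3)/(n-3)) - r/n*(1 - (r-1)/(n-1)))"
  defines "F \<equiv> (r-1)/(n-1) * ((r-2)/(n-2)*(1 - (r-3)/(n-3)) - r/n*(1 - (r-1)/(n-1)))"
  defines "G \<equiv> (r-1)/(n-1) * ((r-2)*(r-3)/((n-2)*(n-3)) - r/n*((r-1)/(n-1)))"
  shows "PPr q1 q2 q3 q4 h h2 x - (h*(q1-q2) + x*q2)^2 =
    (r/n) * (x * (C + 2*(E - F) + (x - 1)*G) + h * (B - 2*(E - x * F)) + h^2 * D + h2 * (A - D))"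
proof -
  define n1 where "n1 = n - 1"
  define n2 where "n2 = n - 2"
  define n3 where "n3 = n - 3"
  have nz: "n1 \<noteq> 0" "n2 \<noteq> 0" "n3 \<noteq> 0" using assms unfolding n1_def n2_def n3_def by auto
  show ?thesis
    unfolding PPr_def q1_def q2_def q3_def q4_def A_def B_def C_def D_def E_def F_def G_def
      n1_def[symmetric] n2_def[symmetric] n3_def[symmetric]
    using assms(1) nz by (simp add: field_simps power2_eq_square)
qed

theorem theorem2:
  fixes N m k :: nat
  assumes "N \<ge> 4" and "1 \<le> m" and "m \<le> N" and "1 \<le> k" and "k \<le> N"
  defines "n \<equiv> real N" and "r \<equiv> real m"
  defines "M \<equiv> real (min m k)"
  defines "Hk \<equiv> (\<Sum>i=1..k. 1 / real i)"
  defines "Hk2 \<equiv> (\<Sum>i=1..k. 1 / (real i)^2)"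
  defines "A \<equiv> 1 - r/n - (r-1)/(n-1) * (3 - 2*(r-2)/(n-2) - r/n * (2 - (r-1)/(n-1)))"
  defines "B \<equiv> (r-1)/(n-1) * (3*(1 - (r-2)/(n-2)) - 2*(r/n)*(1 - (r-1)/(n-1)))"
  defines "C \<equiv> (r-1)/(n-1) * ((r-2)/(n-2) - r*(r-1)/(n*(n-1)))"
  defines "D \<equiv> (r-1)/(n-1) * (2 - 5*(r-2)/(n-2) + 3*((r-2)*(r-3))/((n-2)*(n-3)))
                 - r/n * (1 - (r-1)/(n-1))^2"
  defines "E \<equiv> (r-1)/(n-1) * (3*((r-2)/(n-2))*(1 - (r-3)/(n-3)) - r/n*(1 - (r-1)/(n-1)))"
  defines "F \<equiv> (r-1)/(n-1) * ((r-2)/(n-2)*(1 - (r-3)/(n-3)) - r/n*(1 - (r-1)/(n-1)))"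
  defines "G \<equiv> (r-1)/(n-1) * ((r-2)*(r-3)/((n-2)*(n-3)) - r/n*((r-1)/(n-1)))"
  shows "measure_pmf.variance (ranking_pmf N m) (avg_prec_at m k) =
           1 / M^2 * (r/n) * (real k * (C + 2*(E - F) + (real k - 1)*G)
             + Hk * (B - 2*(E - real k * F)) + Hk^2 * D + Hk2 * (A - D))"
proof -
  let ?R = "relevant_positions N m"
  let ?X = "avg_prec_at m k"
  define Q where "Q = qq N m"
  have fin: "finite ?R" by (rule finite_R)
  have "{1..m} \<in> ?R" using assms unfolding relevant_positions_def by auto
  then have ne: "?R \<noteq> {}" by blast
  define c where "c = real (card ?R)"
  have c0: "c > 0" using fin ne unfolding c_def by (simp add: card_gt_0_iff)
  have M0: "M > 0" using assms unfolding M_def by simp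
  have cnt: "(\<Sum>S\<in>?R. ind S T) = c * Q (card T)" if "T \<subseteq> {1..N}" for T
    using count_sup[of T N m] that assms finite_subset[OF that] unfolding ind_def Q_def c_def by auto
  define E1 where "E1 = (\<Sum>i=1..k. \<Sum>j=1..i. (1 / real i) * Q (card {i,j}))"
  define E2 where "E2 = (\<Sum>i=1..k. \<Sum>a=1..k. (1/real i)*(1/real a)*inner Q i a)"
  have S1: "(\<Sum>S\<in>?R. ?X S) = (1/M) * (c * E1)"
  proof -
    have "(\<Sum>S\<in>?R. ?X S) = (1/M) * (\<Sum>S\<in>?R. \<Sum>i=1..k. \<Sum>j=1..i. (1 / real i) * ind S {i,j})"
      unfolding X_eq M_def by (simp only: sum_distrib_left)
    also have "(\<Sum>S\<in>?R. \<Sum>i=1..k. \<Sum>j=1..i. (1 / real i) * ind S {i,j}) = (\<Sum>i=1..k. \<Sum>j=1..i. \<Sum>S\<in>?R. (1 / real i) * ind S {i,j})"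
      by (rule swap2)
    also have "\<dots> = (\<Sum>i=1..k. \<Sum>j=1..i. c * ((1 / real i) * Q (card {i,j})))"
    proof (intro sum.cong refl)
      fix i j assume "i \<in> {1..k}" "j \<in> {1..i}"
      then have "{i,j} \<subseteq> {1..N}" using assms by auto
      have "(\<Sum>S\<in>?R. (1 / real i) * ind S {i,j}) = (1 / real i) * (\<Sum>S\<in>?R. ind S {i,j})"
        by (rule sum_distrib_left[symmetric])
      then show "(\<Sum>S\<in>?R. (1 / real i) * ind S {i,j}) = c * ((1 / real i) * Q (card {i,j}))"
        using cnt[OF \<open>{i,j} \<subseteq> {1..N}\<close>] by simp
    qed
    also have "\<dots> = c * E1" unfolding E1_def by (simp only: sum_distrib_left)
    finally show ?thesis .
  qed
  have S2: "(\<Sum>S\<in>?R. (?X S)^2) = (1/M)^2 * (c * E2)"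
  proof -
    have "(\<Sum>S\<in>?R. (?X S)^2) = (1/M)^2 * (\<Sum>S\<in>?R. \<Sum>i=1..k. \<Sum>j=1..i. \<Sum>a=1..k. \<Sum>b=1..a. (1 / real i) * (1 / real a) * ind S (insert b (insert j {i,a})))"
      unfolding X2_eq M_def by (simp only: sum_distrib_left)
    also have "(\<Sum>S\<in>?R. \<Sum>i=1..k. \<Sum>j=1..i. \<Sum>a=1..k. \<Sum>b=1..a. (1 / real i) * (1 / real a) * ind S (insert b (insert j {i,a})))
       = (\<Sum>i=1..k. \<Sum>j=1..i. \<Sum>a=1..k. \<Sum>b=1..a. \<Sum>S\<in>?R. (1 / real i) * (1 / real a) * ind S (insert b (insert j {i,a})))"
      by (rule swap4)
    also have "\<dots> = (\<Sum>i=1..k. \<Sum>j=1..i. \<Sum>a=1..k. \<Sum>b=1..a. c * ((1 / real i) * (1 / real a)) * Q (card (insert b (insert j {i,a}))))"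
    proof (intro sum.cong refl)
      fix i j a b assume "i \<in> {1..k}" "j \<in> {1..i}" "a \<in> {1..k}" "b \<in> {1..a}"
      then have T: "insert b (insert j {i,a}) \<subseteq> {1..N}" using assms by auto
      have "(\<Sum>S\<in>?R. (1 / real i) * (1 / real a) * ind S (insert b (insert j {i,a}))) = (1 / real i) * (1 / real a) * (\<Sum>S\<in>?R. ind S (insert b (insert j {i,a})))"
        by (rule sum_distrib_left[symmetric])
      then show "(\<Sum>S\<in>?R. (1 / real i) * (1 / real a) * ind S (insert b (insert j {i,a}))) = c * ((1 / real i) * (1 / real a)) * Q (card (insert b (insert j {i,a})))"
        using cnt[OF T] by simp
    qed
    also have "\<dots> = c * E2"
    proof -
      have "(\<Sum>j=1..i. \<Sum>a=1..k. \<Sum>b=1..a. c * ((1 / real i) * (1 / real a)) * Q (card (insert b (insert j {i,a}))))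
         = (\<Sum>a=1..k. c * ((1/real i)*(1/real a)*inner Q i a))" for i
        by (subst sum.swap) (simp add: inner_def sum_distrib_left mult_ac)
      then show ?thesis unfolding E2_def by (simp add: sum_distrib_left)
    qed
    finally show ?thesis .
  qed
  have var: "measure_pmf.variance (ranking_pmf N m) ?X = (1/M)^2 * E2 - ((1/M) * E1)^2"
    unfolding ranking_pmf_def variance_sets[OF fin ne] c_def[symmetric] S1 S2
    using c0 by (simp add: field_simps)
  have n0: "n \<noteq> 0" "n - 1 \<noteq> 0" "n - 2 \<noteq> 0" "n - 3 \<noteq> 0" using assms(1) unfolding n_def by auto
  have q: "Q 1 = r/n" "Q 2 = r/n * ((r-1)/(n-1))" "Q 3 = r/n * ((r-1)/(n-1)) * ((r-2)/(n-2))"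
     "Q 4 = r/n * ((r-1)/(n-1)) * ((r-2)/(n-2)) * ((r-3)/(n-3))"
    unfolding Q_def qq_def r_def n_def by (simp_all add: numeral_eq_Suc lessThan_Suc mult_ac)
  have pp: "E2 = PPr (Q 1) (Q 2) (Q 3) (Q 4) Hk Hk2 (real k)"
    unfolding E2_def E2_eq PP_def PPr_def Hk_def Hk2_def HH_def HH2_def ..
  have e1: "E1 = Hk * (Q 1 - Q 2) + real k * Q 2" unfolding E1_def E1_eq Hk_def HH_def ..
  have fa: "PPr (Q 1) (Q 2) (Q 3) (Q 4) Hk Hk2 (real k) - (Hk*(Q 1 - Q 2) + real k * Q 2)^2 =
    (r/n) * (real k * (C + 2*(E - F) + (real k - 1)*G) + Hk * (B - 2*(E - real k * F)) + Hk^2 * D + Hk2 * (A - D))"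
    unfolding q A_def B_def C_def D_def E_def F_def G_def by (rule final_alg[OF n0])
  show ?thesis unfolding var pp e1 using fa M0
    by (simp add: power2_eq_square field_simps)
qed


end
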